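(* Let $a\ge3$ and let $H\in\mathfrak{H}$ (notation in context). Then \[ \{n\in\mathbb{N}:\ \text{every prime } q \text{ dividing } n \text{ satisfies } q\bmod a\in H\}\subseteq\mathcal{E}^*_a. \]
   Context: Let $a\ge3$ have canonical factorization $a=2^{\gamma_0}p_1^{\gamma_1}\cdots p_k^{\gamma_k}$ ($p_i$ distinct odd primes). Let $G=(\mathbb{Z}/a\mathbb{Z})^*$, identified by the Chinese remainder theorem with $G_0\times G_1\times\cdots\times G_k$, where $G_0=(\mathbb{Z}/2^{\gamma_0}\mathbb{Z})^*$ and $G_i=(\mathbb{Z}/p_i^{\gamma_i}\mathbb{Z})^*$. For $1\le i\le k$ let $H_i$ be the unique maximal subgroup of the cyclic group $G_i$ not containing $-1$ (its subgroup of odd order); its index is $2^{m_i}$ where $2^{m_i}\|p_i-1$. Let $H_0=G_0$ (trivial) if $\gamma_0\le1$; if $\gamma_0\ge2$, $H_0$ denotes any subgroup of $G_0$ of index $2$ not containing $-1\bmod 2^{\gamma_0}$. Let $\delta=0$ if $\gamma_0\le1$ and $\delta=2$ if $\gamma_0\ge2$, and define $m\ge1$ by $2^m\|\gcd(\delta,p_1-1,\dots,p_k-1)$. Let $\mathfrak{H}$ be the set of subgroups of $G$ of the form $G_0\times\cdots\times G_{i-1}\times H_i\times G_{i+1}\times\cdots\times G_k$ ($0\le i\le k$, any allowed choice of $H_0$ when $i=0$) with index $[G:H]=2^m$. For a positive integer $n$, $R(n;a)$ is the number of pairs $(x,y)$ of positive integers with $\frac an=\frac1x+\frac1y$, and $\mathcal{E}^*_a=\{n\in\mathbb{N}:R(n;a)=0,\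 \gcd(n,a)=1\}$. *)

theory Defs
  imports "HOL-Number_Theory.Number_Theory" "HOL-Algebra.Coset"
begin

text \<open>The unit group of Z/qZ, as the units of the residue ring (carrier = reduced residues in 0..q-1).\<close>
definition unitgrp :: "nat \<Rightarrow> int monoid" where
  "unitgrp q = units_of (residue_ring (int q))"

definition neg_one :: "nat \<Rightarrow> int" where
  "neg_one q = int q - 1"

text \<open>Pull back a subgroup S of (Z/qZ)^* (q the exact prime-power part of a) to (Z/aZ)^*;
  via CRT this is G_0 x ... x S x ... x G_k.\<close>
definition lift_sub :: "nat \<Rightarrow> nat \<Rightarrow> int set \<Rightarrow> int set" where
  "lift_sub a q S = {x \<in> carrier (unitgrp a). x mod int q \<in> S}"

definition delta :: "nat \<Rightarrow> nat" where
  "delta a = (if multiplicity (2::nat) a \<ge> 2 then 2 else 0)"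

definition mexp :: "nat \<Rightarrow> nat" where
  "mexp a = multiplicity (2::nat)
     (Gcd (insert (delta a) {p - 1 | p. prime p \<and> p dvd a \<and> odd p}))"

definition frakH :: "nat \<Rightarrow> int set set" where
  "frakH a = {H.
     ((\<exists>p S. prime p \<and> odd p \<and> p dvd a \<and>
         (let q = p ^ multiplicity p a in
            subgroup S (unitgrp q) \<and> neg_one q \<notin> S \<and>
            (\<forall>T. subgroup T (unitgrp q) \<and> neg_one q \<notin> T \<and> S \<subseteq> T \<longrightarrow> T = S) \<and>
            H = lift_sub a q S))
      \<or> (multiplicity (2::nat) a \<le> 1 \<and> H = carrier (unitgrp a))
      \<or> (\<exists>S. multiplicity (2::nat) a \<ge> 2 \<and>
         (let q = 2 ^ multiplicity (2::nat) a in
            subgroup S (unitgrp q) \<and> card (rcosets\<^bsub>unitgrp q\<^esub> S) = 2 \<and>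
            neg_one q \<notin> S \<and> H = lift_sub a q S)))
     \<and> card (rcosets\<^bsub>unitgrp a\<^esub> H) = 2 ^ mexp a}"

definition R :: "nat \<Rightarrow> nat \<Rightarrow> nat" where
  "R n a = card {(x, y). x > 0 \<and> y > 0 \<and>
     (of_nat a / of_nat n :: rat) = 1 / of_nat x + 1 / of_nat y}"

definition Estar :: "nat \<Rightarrow> nat set" where
  "Estar a = {n. n > 0 \<and> R n a = 0 \<and> gcd n a = 1}"

end

theory Submission imports Defs begin

lemma ug_facts:
  assumes "q > (1::nat)"
  shows "carrier (unitgrp q) = {x. 0 < x \<and> x < int q \<and> coprime x (int q)}"
    and "\<And>x y. x \<otimes>\<^bsub>unitgrp q\<^esub> y = (x * y) mod int q"
    and "\<one>\<^bsub>unitgrp q\<^esub> = 1"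
    and "group (unitgrp q)"
proof -
  interpret residues "int q" "residue_ring (int q)"
    by unfold_locales (use assms in auto)
  show "carrier (unitgrp q) = {x. 0 < x \<and> x < int q \<and> coprime x (int q)}"
    unfolding unitgrp_def units_of_carrier using res_units_eq by simp
  show "\<And>x y. x \<otimes>\<^bsub>unitgrp q\<^esub> y = (x * y) mod int q"
    unfolding unitgrp_def units_of_mult using res_mult_eq by simp
  show "\<one>\<^bsub>unitgrp q\<^esub> = 1"
    unfolding unitgrp_def units_of_one using res_one_eq by simp
  show "group (unitgrp q)" unfolding unitgrp_def by (rule units_group)
qed

lemma closure:
  assumes q: "q > (1::nat)" and S: "subgroup S (unitgrp q)"
    and P: "\<And>p. prime p \<Longrightarrow> p dvd n \<Longrightarrow> int (p mod q) \<in> S"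
  and n: "n > 0"
  shows "d dvd n \<Longrightarrow> int (d mod q) \<in> S"
proof (induction d rule: less_induct)
  case (less d)
  show ?case
  proof (cases "d = 1")
    case True
    then show ?thesis using subgroup.one_closed[OF S] ug_facts(3)[OF q] q by simp
  next
    case False
    show ?thesis
    proof (cases "d = 0")
      case True
      then show ?thesis using less n by simp
    next
      case False
      with \<open>d \<noteq> 1\<close> obtain p where p: "prime p" "p dvd d" using prime_factor_nat by blast
      then obtain e where e: "d = p * e" by (auto elim: dvdE)
      have "e > 0" using e False by auto
      hence "e < d" using e prime_gt_1_nat[OF p(1)] n_less_m_mult_n[of e p] by simp 
      have "e dvd n" using less.prems e by (metis dvd_mult_right)
      hence eS: "int (e mod q) \<in> S" using less.IH \<open>e < d\<close> by blast
      have pS: "int (p mod q) \<in> S" using P p less.prems dvd_trans by blast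
      have "int (p mod q) \<otimes>\<^bsub>unitgrp q\<^esub> int (e mod q) \<in> S"
        using subgroup.m_closed[OF S pS eS] .
      also have "int (p mod q) \<otimes>\<^bsub>unitgrp q\<^esub> int (e mod q) = int (d mod q)"
        unfolding ug_facts(2)[OF q] e by (metis of_nat_mult of_nat_mod mod_mult_eq)
      finally show ?thesis .
    qed
  qed
qed
lemma negone:
  assumes q: "q > (1::nat)" and S: "subgroup S (unitgrp q)"
    and s1: "s1 \<in> S" and s2: "s2 \<in> S" and sum: "(s1 + s2) mod int q = 0"
  shows "neg_one q \<in> S"
proof -
  interpret G: group "unitgrp q" using ug_facts(4)[OF q] .
  define w where "w = inv\<^bsub>unitgrp q\<^esub> s2"
  have wS: "w \<in> S" unfolding w_def using subgroup.m_inv_closed[OF S s2] .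
  have s2c: "s2 \<in> carrier (unitgrp q)" using subgroup.subset[OF S] s2 by auto
  have "s2 \<otimes>\<^bsub>unitgrp q\<^esub> w = 1" unfolding w_def using G.r_inv[OF s2c] ug_facts(3)[OF q] by simp
  hence sw: "(s2 * w) mod int q = 1" using ug_facts(2)[OF q] by simp
  have m1: "s1 mod int q = (- s2) mod int q"
    using sum by (simp add: mod_eq_dvd_iff dvd_eq_mod_eq_0)
  have "(s1 * w) mod int q = ((s1 mod int q) * w) mod int q" by (simp add: mod_mult_left_eq)
  also have "\<dots> = ((- s2) * w) mod int q" using m1 by (simp add: mod_mult_left_eq)
  also have "\<dots> = (- (s2 * w)) mod int q" by simp
  also have "\<dots> = (- ((s2 * w) mod int q)) mod int q" by (simp add: mod_minus_eq)
  also have "\<dots> = int q - 1" using sw zmod_minus1[of "int q"] q by simp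
  finally have "s1 \<otimes>\<^bsub>unitgrp q\<^esub> w = neg_one q" using ug_facts(2)[OF q] neg_one_def by simp
  moreover have "s1 \<otimes>\<^bsub>unitgrp q\<^esub> w \<in> S" using subgroup.m_closed[OF S s1 wS] .
  ultimately show ?thesis by simp
qed

lemma decomp:
  fixes a n x y :: nat
  assumes eq: "a * x * y = n * (x + y)" and x: "x > 0" and y: "y > 0" and cop: "coprime n a"
  shows "\<exists>u v. u dvd n \<and> v dvd n \<and> a dvd u + v"
proof -
  define g where "g = gcd x y"
  have g0: "g > 0" using x g_def by simp
  obtain u v where uv: "x = u * g" "y = v * g" "coprime u v"
    using gcd_coprime_exists[of x y] g0 unfolding g_def by blast
  have "g * (a * g * u * v) = g * (n * (u + v))" using eq unfolding uv by (simp add: algebra_simps)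
  hence eq2: "a * g * u * v = n * (u + v)" using mult_left_cancel[of g] g0 by blast
  have c1: "coprime u (u + v)" using uv(3) unfolding coprime_iff_gcd_eq_1 by (simp only: gcd_add2)
  have c2: "coprime v (u + v)" using uv(3) unfolding coprime_iff_gcd_eq_1 by (simp only: add.commute[of u v] gcd_add2 gcd.commute[of v u])
  have c3: "coprime (u * v) (u + v)" using c1 c2 by simp
  have "u * v dvd n * (u + v)" unfolding eq2[symmetric] by (rule dvdI[of _ _ "a * g"]) (simp add: ac_simps)
  hence "u * v dvd n" using c3 coprime_dvd_mult_left_iff by blast
  then obtain t where t: "n = u * v * t" by (auto elim: dvdE)
  have uv0: "u * v > 0" using x y uv by auto
  have "u * v * (a * g) = u * v * (t * (u + v))" using eq2 unfolding t by (simp add: algebra_simps)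
  hence "a * g = t * (u + v)" using mult_left_cancel[of "u*v"] uv0 by blast
  hence "a dvd t * (u + v)" by (metis dvd_triv_left)
  moreover have "coprime a t" using cop unfolding t by (simp add: coprime_commute)
  ultimately have "a dvd u + v" using coprime_dvd_mult_right_iff by blast
  moreover have "u dvd n" "v dvd n" using t by auto
  ultimately show ?thesis by blast
qed

lemma mexp_pos:
  assumes a: "a \<ge> (3::nat)" and m: "multiplicity (2::nat) a \<le> 1"
  shows "mexp a \<ge> 1"
proof -
  have d: "delta a = 0" using m unfolding delta_def by simp
  define k where "k = multiplicity (2::nat) a"
  obtain y where y: "a = 2 ^ k * y" "\<not> 2 dvd y"
    using multiplicity_decompose'[of a 2] a unfolding k_def by auto
  have m': "k \<le> 1" using m k_def by simp
  have "y \<noteq> 1"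
  proof
    assume "y = 1"
    hence "a = 2 ^ k" using y by simp
    also have "\<dots> \<le> 2 ^ 1" using m' by (intro power_increasing) auto
    finally show False using a by simp
  qed
  moreover have "y \<noteq> 0" using y(2) by (rule contrapos_nn) simp
  ultimately obtain p where p1: "prime p" "p dvd y" using prime_factor_nat by blast
  have p2: "odd p" using p1(2) y(2) dvd_trans by blast
  have p3: "p dvd a" by (subst y(1)) (rule dvd_mult[OF p1(2)])
  note p = p1(1) p2 p3
  define X where "X = insert (delta a) {p - 1 | p. prime p \<and> p dvd a \<and> odd p}"
  have "p - 1 \<in> X" using p X_def by auto
  hence "Gcd X dvd p - 1" by (rule Gcd_dvd)
  moreover have "p - 1 \<noteq> 0" using p prime_gt_1_nat[of p] by simp
  ultimately have G0: "Gcd X \<noteq> 0" using \<open>p - 1 \<in> X\<close> by auto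
  have "2 dvd Gcd X"
  proof (rule Gcd_greatest)
    fix b assume "b \<in> X"
    then show "2 dvd b" unfolding X_def d
      using prime_gt_1_nat by (auto simp: odd_pos)
  qed
  hence "multiplicity 2 (Gcd X) > 0" using G0 by (simp add: prime_multiplicity_gt_zero_iff)
  thus ?thesis unfolding mexp_def X_def by simp
qed

lemma get_qS:
  fixes a :: nat and H :: "int set"
  assumes a: "a \<ge> 3" and H: "H \<in> frakH a"
  obtains q S where "q > 1" "q dvd a" "subgroup S (unitgrp q)" "neg_one q \<notin> S" "H = lift_sub a q S"
proof -
  have a1: "a > 1" "a \<noteq> 0" using a by auto
  from H have H1: "(\<exists>p S. prime p \<and> odd p \<and> p dvd a \<and>
         (let q = p ^ multiplicity p a in
            subgroup S (unitgrp q) \<and> neg_one q \<notin> S \<and>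
            (\<forall>T. subgroup T (unitgrp q) \<and> neg_one q \<notin> T \<and> S \<subseteq> T \<longrightarrow> T = S) \<and>
            H = lift_sub a q S))
      \<or> (multiplicity (2::nat) a \<le> 1 \<and> H = carrier (unitgrp a))
      \<or> (\<exists>S. multiplicity (2::nat) a \<ge> 2 \<and>
         (let q = 2 ^ multiplicity (2::nat) a in
            subgroup S (unitgrp q) \<and> card (rcosets\<^bsub>unitgrp q\<^esub> S) = 2 \<and>
            neg_one q \<notin> S \<and> H = lift_sub a q S))"
    and Hc: "card (rcosets\<^bsub>unitgrp a\<^esub> H) = 2 ^ mexp a"
    unfolding frakH_def by auto
  from H1 show thesis
  proof (elim disjE exE conjE)
    fix p S assume p: "prime p" "odd p" "p dvd a" and L: "let q = p ^ multiplicity p a in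
            subgroup S (unitgrp q) \<and> neg_one q \<notin> S \<and>
            (\<forall>T. subgroup T (unitgrp q) \<and> neg_one q \<notin> T \<and> S \<subseteq> T \<longrightarrow> T = S) \<and>
            H = lift_sub a q S"
    define q where "q = p ^ multiplicity p a"
    have L': "subgroup S (unitgrp q)" "neg_one q \<notin> S" "H = lift_sub a q S"
      using L unfolding q_def Let_def by auto
    have "multiplicity p a > 0" using p a1 by (simp add: prime_multiplicity_gt_zero_iff)
    hence "q > 1" unfolding q_def using prime_gt_1_nat[OF p(1)] by (intro one_less_power) auto
    moreover have "q dvd a" unfolding q_def by (rule multiplicity_dvd)
    ultimately show thesis using that L' by blast
  next
    fix S assume m: "multiplicity (2::nat) a \<ge> 2" and L: "let q = 2 ^ multiplicity (2::nat) a in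
            subgroup S (unitgrp q) \<and> card (rcosets\<^bsub>unitgrp q\<^esub> S) = 2 \<and>
            neg_one q \<notin> S \<and> H = lift_sub a q S"
    define q where "q = (2::nat) ^ multiplicity (2::nat) a"
    have L': "subgroup S (unitgrp q)" "neg_one q \<notin> S" "H = lift_sub a q S"
      using L unfolding q_def Let_def by auto
    have "q > 1" unfolding q_def using m by (intro one_less_power) auto
    moreover have "q dvd a" unfolding q_def by (rule multiplicity_dvd)
    ultimately show thesis using that L' by blast
  next
    assume m: "multiplicity (2::nat) a \<le> 1" and HG: "H = carrier (unitgrp a)"
    interpret G: group "unitgrp a" using ug_facts(4)[OF a1(1)] .
    have fin: "finite (carrier (unitgrp a))" unfolding ug_facts(1)[OF a1(1)]
      by (rule finite_subset[of _ "{0..<int a}"]) auto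
    have "1 \<in> carrier (unitgrp a)" using G.one_closed ug_facts(3)[OF a1(1)] by simp
    hence "card (carrier (unitgrp a)) > 0" using fin card_gt_0_iff by blast
    moreover have "card (rcosets\<^bsub>unitgrp a\<^esub> H) * card H = card (carrier (unitgrp a))"
      using G.lagrange[OF G.subgroup_self] HG unfolding order_def by simp
    ultimately have "card (rcosets\<^bsub>unitgrp a\<^esub> H) = 1" using HG by simp
    hence "mexp a = 0" using Hc by simp
    thus thesis using mexp_pos[OF a m] by simp
  qed
qed

theorem lemma2p7:
  fixes a :: nat and H :: "int set"
  assumes "a \<ge> 3" and "H \<in> frakH a"
  shows "{n::nat. n > 0 \<and> (\<forall>q::nat. prime q \<and> q dvd n \<longrightarrow> int (q mod a) \<in> H)} \<subseteq> Estar a"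
proof
  have a1: "a > 1" using assms(1) by simp
  obtain q S where Q: "q > 1" "q dvd a" "subgroup S (unitgrp q)" "neg_one q \<notin> S" "H = lift_sub a q S"
    using get_qS[OF assms] by blast
  fix n assume "n \<in> {n::nat. n > 0 \<and> (\<forall>q::nat. prime q \<and> q dvd n \<longrightarrow> int (q mod a) \<in> H)}"
  hence n: "n > 0" and P: "\<And>r. prime r \<Longrightarrow> r dvd n \<Longrightarrow> int (r mod a) \<in> H" by auto
  have PS: "int (r mod q) \<in> S" if "prime r" "r dvd n" for r
  proof -
    have "int (r mod a) mod int q \<in> S" using P[OF that] Q(5) unfolding lift_sub_def by simp
    moreover have "int (r mod a) mod int q = int (r mod q)"
    proof -
      have "int (r mod a) mod int q = int (r mod a mod q)" by (rule of_nat_mod[symmetric])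
      also have "r mod a mod q = r mod q" by (rule mod_mod_cancel[OF Q(2)])
      finally show ?thesis .
    qed
    ultimately show ?thesis by (simp only:)
  qed
  have cop: "coprime n a"
  proof (rule ccontr)
    assume nc: "\<not> coprime n a"
    hence "gcd n a \<noteq> 1" using coprime_iff_gcd_eq_1 by blast
    then obtain r where r: "prime r" "r dvd gcd n a" using prime_factor_nat by blast
    have rn: "r dvd n" and ra: "r dvd a" using r(2) dvd_trans gcd_dvd1 gcd_dvd2 by blast+
    have "int (r mod a) \<in> carrier (unitgrp a)" using P[OF r(1) rn] Q(5) unfolding lift_sub_def by blast
    hence c: "coprime (int (r mod a)) (int a)" unfolding ug_facts(1)[OF a1] by blast
    have "r dvd r mod a" using dvd_mod[OF dvd_refl ra] .
    hence d1: "int r dvd int (r mod a)" by (simp only: int_dvd_int_iff)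
    have d2: "int r dvd int a" using ra by (simp only: int_dvd_int_iff)
    have "int r dvd 1" using coprime_common_divisor[OF c d1 d2] by simp
    hence "r dvd 1" using int_dvd_int_iff[of r 1] by simp
    hence "r = 1" by simp
    thus False using r(1) by simp
  qed
  have Rz: "R n a = 0"
  proof -
    have "{(x, y). x > 0 \<and> y > 0 \<and>
       (of_nat a / of_nat n :: rat) = 1 / of_nat x + 1 / of_nat y} = {}"
    proof (rule ccontr)
      assume "{(x, y). x > 0 \<and> y > 0 \<and>
       (of_nat a / of_nat n :: rat) = 1 / of_nat x + 1 / of_nat y} \<noteq> {}"
      then obtain x y :: nat where x: "x > 0" and y: "y > 0"
        and eq: "(of_nat a / of_nat n :: rat) = 1 / of_nat x + 1 / of_nat y" by auto
      have nz: "(of_nat n :: rat) \<noteq> 0" "(of_nat x :: rat) \<noteq> 0" "(of_nat y :: rat) \<noteq> 0"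
        using n x y by auto
      have "(of_nat a :: rat) * of_nat x * of_nat y = of_nat n * (of_nat x + of_nat y)"
        using eq nz by (simp add: field_simps)
      hence "(of_nat (a * x * y) :: rat) = of_nat (n * (x + y))"
        by (simp only: of_nat_mult of_nat_add)
      hence eqn: "a * x * y = n * (x + y)" by (simp only: of_nat_eq_iff)
      obtain u v where uv: "u dvd n" "v dvd n" "a dvd u + v"
        using decomp[OF eqn x y cop] by blast
      have uS: "int (u mod q) \<in> S" using closure[OF Q(1) Q(3) PS n uv(1)] by blast
      have vS: "int (v mod q) \<in> S" using closure[OF Q(1) Q(3) PS n uv(2)] by blast
      have "q dvd u + v" using Q(2) uv(3) by (rule dvd_trans)
      hence "(u mod q + v mod q) mod q = 0" by (simp add: mod_add_eq)
      hence "int ((u mod q + v mod q) mod q) = 0" by (simp only: of_nat_0)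
      moreover have "int ((u mod q + v mod q) mod q) = (int (u mod q) + int (v mod q)) mod int q"
        by (simp only: of_nat_mod[of "u mod q + v mod q" q] of_nat_add)
      ultimately have "(int (u mod q) + int (v mod q)) mod int q = 0" by (simp only:)
      hence "neg_one q \<in> S" using negone[OF Q(1) Q(3) uS vS] by simp
      thus False using Q(4) by simp
    qed
    thus ?thesis unfolding R_def by (simp only: card.empty)
  qed
  show "n \<in> Estar a" unfolding Estar_def using n Rz cop coprime_iff_gcd_eq_1 by blast
qed

end
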